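(* Let $T$ be a set of states and $\varphi=\mathrm{Safety}(T)$. There exists an infinitely branching (countable) MDP $\mathcal M$ with initial state $s$ such that (i) for every FR-strategy $\sigma$ we have $\mathcal P_{\mathcal M,s,\sigma}(\varphi)=0$, and (ii) for every $c\in[0,1)$ there exists an HD-strategy $\sigma$ such that $\mathcal P_{\mathcal M,s,\sigma}(\varphi)\ge c$. Hence $\epsilon$-optimal strategies for safety require infinite memory (i.e., cannot in general be chosen FR).
   Context: An MDP is $\mathcal M=\langle S,S_\Box,S_\circ,\longrightarrow,P\rangle$ where $S$ is a countable set of states partitioned into player states $S_\Box$ and random states $S_\circ$, $\longrightarrow\subseteq S\times S$ is a transition relation in which every state has at least one successor, and $P$ assigns to each random state a probability distribution over its successors. $\mathcal M$ is finitely branching if every state has finitely many successors, otherwise infinitely branching. A play is an infinite sequence $s_0s_1\cdots$ with $s_i\longrightarrow s_{i+1}$ for all $i$. A strategy is a function $\sigma:S^*S_\Box\to\mathcal D(S)$ assigning to each partial play ending in a player state $s$ a probability distribution over successors of $s$. Strategies are implemented by probabilistic transducers $(\mathsf M,\mathsf m_0,\pi_u,\pi_s)$ with countable memory $\mathsf M$, initial mode $\mathsf m_0$, randomized memory update $\pi_u:\mathsf M\times S\to\mathcal D(\mathsf M)$ and randomized successor choice $\pi_s:\mathsf M\times S_\Box\to\mathcal D(S)$ (choosing only successors of the current state); the induced strategy is $\sigma(s_0\cdots s_n)=\pi_s(s_n,\pi_u(s_0\cdots s_{n-1},\mathsf m_0))$ with $\pi_u$ extended naturally. A strategy is finite-memory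 (F) if some transducer with finite $\mathsf M$ induces it, deterministic (D) if $\pi_u,\pi_s$ can be taken Dirac; FR = finite-memory randomized, HD = history-dependent deterministic. $\mathcal P_{\mathcal M,s,\sigma}$ is the induced probability measure on plays from $s$. The safety objective $\mathrm{Safety}(T)$ is the set of plays that never visit a state in $T$. The value of $s$ is $\sup_\sigma\mathcal P_{\mathcal M,s,\sigma}(\varphi)$; $\sigma$ is $\epsilon$-optimal from $s$ if it achieves at least the value minus $\epsilon$. *)

theory Defs
  imports "HOL-Probability.Probability"
begin

text \<open>States are natural numbers (every countable MDP is isomorphic
to one whose states form a subset of nat). S = mdp_states, player states S_Box =
mdp_player, random states are mdp_states - mdp_player.\<close>

record mdp =
  mdp_states :: "nat set"
  mdp_player :: "nat set"
  mdp_trans  :: "(nat \<times> nat) set"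
  mdp_prob   :: "nat \<Rightarrow> nat pmf"

definition succs :: "mdp \<Rightarrow> nat \<Rightarrow> nat set" where
  "succs M x = {y. (x, y) \<in> mdp_trans M}"

definition valid_mdp :: "mdp \<Rightarrow> bool" where
  "valid_mdp M \<longleftrightarrow>
     mdp_player M \<subseteq> mdp_states M \<and>
     mdp_trans M \<subseteq> mdp_states M \<times> mdp_states M \<and>
     (\<forall>x\<in>mdp_states M. succs M x \<noteq> {}) \<and>
     (\<forall>x\<in>mdp_states M - mdp_player M. set_pmf (mdp_prob M x) \<subseteq> succs M x)"

definition infinitely_branching :: "mdp \<Rightarrow> bool" where
  "infinitely_branching M \<longleftrightarrow> (\<exists>x\<in>mdp_states M. infinite (succs M x))"

text \<open>Histories (partial plays ending in a player state): nonempty sequences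
over S whose last state is a player state. A strategy is a function
nat list => nat pmf; only its values on histories matter.\<close>

definition histories :: "mdp \<Rightarrow> nat list set" where
  "histories M = {h. h \<noteq> [] \<and> set h \<subseteq> mdp_states M \<and> last h \<in> mdp_player M}"

text \<open>Probabilistic transducers with memory modes in a set Mem of naturals
(countable memory). The natural extension of the memory update to sequences.\<close>

fun upd_ext :: "(nat \<Rightarrow> nat \<Rightarrow> nat pmf) \<Rightarrow> nat \<Rightarrow> nat list \<Rightarrow> nat pmf" where
  "upd_ext pu m [] = return_pmf m"
| "upd_ext pu m (x # xs) = bind_pmf (pu m x) (\<lambda>m'. upd_ext pu m' xs)"

definition induced_strategy ::
  "(nat \<Rightarrow> nat \<Rightarrow> nat pmf) \<Rightarrow> (nat \<Rightarrow> nat \<Rightarrow> nat pmf) \<Rightarrow> nat \<Rightarrow> nat list \<Rightarrow> nat pmf" where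
  "induced_strategy pu ps m0 h = bind_pmf (upd_ext pu m0 (butlast h)) (\<lambda>m. ps m (last h))"

definition transducer ::
  "mdp \<Rightarrow> nat set \<Rightarrow> nat \<Rightarrow> (nat \<Rightarrow> nat \<Rightarrow> nat pmf) \<Rightarrow> (nat \<Rightarrow> nat \<Rightarrow> nat pmf) \<Rightarrow> bool" where
  "transducer M Mem m0 pu ps \<longleftrightarrow>
     m0 \<in> Mem \<and>
     (\<forall>m\<in>Mem. \<forall>x\<in>mdp_states M. set_pmf (pu m x) \<subseteq> Mem) \<and>
     (\<forall>m\<in>Mem. \<forall>x\<in>mdp_player M. set_pmf (ps m x) \<subseteq> succs M x)"

definition deterministic_transducer ::
  "mdp \<Rightarrow> nat set \<Rightarrow> (nat \<Rightarrow> nat \<Rightarrow> nat pmf) \<Rightarrow> (nat \<Rightarrow> nat \<Rightarrow> nat pmf) \<Rightarrow> bool" where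
  "deterministic_transducer M Mem pu ps \<longleftrightarrow>
     (\<forall>m\<in>Mem. \<forall>x\<in>mdp_states M. \<exists>m'. pu m x = return_pmf m') \<and>
     (\<forall>m\<in>Mem. \<forall>x\<in>mdp_player M. \<exists>y. ps m x = return_pmf y)"

definition implements :: "mdp \<Rightarrow> (nat list \<Rightarrow> nat pmf) \<Rightarrow> nat \<Rightarrow>
    (nat \<Rightarrow> nat \<Rightarrow> nat pmf) \<Rightarrow> (nat \<Rightarrow> nat \<Rightarrow> nat pmf) \<Rightarrow> bool" where
  "implements M \<sigma> m0 pu ps \<longleftrightarrow> (\<forall>h\<in>histories M. \<sigma> h = induced_strategy pu ps m0 h)"

definition FR_strategy :: "mdp \<Rightarrow> (nat list \<Rightarrow> nat pmf) \<Rightarrow> bool" where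
  "FR_strategy M \<sigma> \<longleftrightarrow>
     (\<exists>Mem m0 pu ps. finite Mem \<and> transducer M Mem m0 pu ps \<and> implements M \<sigma> m0 pu ps)"

definition HD_strategy :: "mdp \<Rightarrow> (nat list \<Rightarrow> nat pmf) \<Rightarrow> bool" where
  "HD_strategy M \<sigma> \<longleftrightarrow>
     (\<exists>Mem m0 pu ps. transducer M Mem m0 pu ps \<and> deterministic_transducer M Mem pu ps
        \<and> implements M \<sigma> m0 pu ps)"

definition step :: "mdp \<Rightarrow> (nat list \<Rightarrow> nat pmf) \<Rightarrow> nat list \<Rightarrow> nat pmf" where
  "step M \<sigma> h = (if last h \<in> mdp_player M then \<sigma> h else mdp_prob M (last h))"

fun surv :: "mdp \<Rightarrow> (nat list \<Rightarrow> nat pmf) \<Rightarrow> nat set \<Rightarrow> nat \<Rightarrow> nat list \<Rightarrow> ennreal" where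
  "surv M \<sigma> T 0 h = 1"
| "surv M \<sigma> T (Suc n) h =
     (\<integral>\<^sup>+ t. (if t \<in> T then 0 else surv M \<sigma> T n (h @ [t])) \<partial>measure_pmf (step M \<sigma> h))"

text \<open>P_{M,s,sigma}(Safety T): by continuity from above of the induced measure on plays,
the probability of never visiting T equals the infimum over n of the probability
that the first n+1 states avoid T.\<close>
definition safety_prob :: "mdp \<Rightarrow> (nat list \<Rightarrow> nat pmf) \<Rightarrow> nat set \<Rightarrow> nat \<Rightarrow> ennreal" where
  "safety_prob M \<sigma> T s = (if s \<in> T then 0 else (INF n. surv M \<sigma> T n [s]))"

end

theory Submission
  imports Defs
begin

definition qq :: "nat \<Rightarrow> real" where "qq k = (1/2)^k"

definition M0 :: mdp where
  "M0 = \<lparr> mdp_states = UNIV, mdp_player = {0},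
          mdp_trans = {(0,k)|k. 2 \<le> k} \<union> {(1,1)} \<union> {(k,t)|k t. 2 \<le> k \<and> t \<le> 1},
          mdp_prob = (\<lambda>k. if k = 1 then return_pmf 1
                          else map_pmf (\<lambda>b. if b then 1 else 0) (bernoulli_pmf (qq k))) \<rparr>"

lemma qq_pos: "0 < qq k" and qq_le1: "qq k \<le> 1"
  by (auto simp: qq_def power_le_one)

lemma succs0: "succs M0 0 = {k. 2 \<le> k}"
  by (auto simp: succs_def M0_def)

lemma succs1: "succs M0 1 = {1}"
  by (auto simp: succs_def M0_def)

lemma succsk: "2 \<le> k \<Longrightarrow> succs M0 k = {0,1}"
  by (auto simp: succs_def M0_def)

lemma valid: "valid_mdp M0"
  unfolding valid_mdp_def
proof (intro conjI ballI)
  show "mdp_player M0 \<subseteq> mdp_states M0" "mdp_trans M0 \<subseteq> mdp_states M0 \<times> mdp_states M0"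
    by (auto simp: M0_def)
next
  fix x assume "x \<in> mdp_states M0"
  show "succs M0 x \<noteq> {}"
    using succs0 succs1 succsk[of x] by (cases "x = 0 \<or> x = 1") auto
next
  fix x assume x: "x \<in> mdp_states M0 - mdp_player M0"
  then have "x \<noteq> 0" by (simp add: M0_def)
  show "set_pmf (mdp_prob M0 x) \<subseteq> succs M0 x"
  proof (cases "x = 1")
    case True then show ?thesis by (simp add: M0_def succs_def)
  next
    case False
    with \<open>x \<noteq> 0\<close> have "2 \<le> x" by simp
    then show ?thesis using False by (auto simp: M0_def succs_def)
  qed
qed

lemma infb: "infinitely_branching M0"
  unfolding infinitely_branching_def
proof
  show "0 \<in> mdp_states M0" by (simp add: M0_def)
  show "infinite (succs M0 0)" unfolding succs0
    using infinite_Icc_iff by (metis atLeast_def infinite_Ici)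
qed

lemma step0: "step M0 \<sigma> h = (if last h = 0 then \<sigma> h else mdp_prob M0 (last h))"
  by (simp add: step_def M0_def)

lemma int_k: "2 \<le> k \<Longrightarrow> (\<integral>\<^sup>+ t. f t \<partial>measure_pmf (mdp_prob M0 k)) = f 1 * ennreal (qq k) + f 0 * ennreal (1 - qq k)"
  using qq_pos[of k] qq_le1[of k] by (simp add: M0_def)

definition pu0 :: "nat \<Rightarrow> nat \<Rightarrow> nat pmf" where "pu0 m x = return_pmf (Suc m)"
definition psj :: "nat \<Rightarrow> nat \<Rightarrow> nat \<Rightarrow> nat pmf" where "psj j m x = return_pmf (m + j + 2)"
definition sigj :: "nat \<Rightarrow> nat list \<Rightarrow> nat pmf" where "sigj j = induced_strategy pu0 (psj j) 0"

lemma upd_pu0: "upd_ext pu0 m xs = return_pmf (m + length xs)"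
  by (induction xs arbitrary: m) (auto simp: pu0_def bind_return_pmf)

lemma sigj_eq: "h \<noteq> [] \<Longrightarrow> sigj j h = return_pmf (length h + j + 1)"
  by (cases h rule: rev_cases) (auto simp: sigj_def induced_strategy_def upd_pu0 psj_def bind_return_pmf)

lemma qq_Suc: "qq (Suc k) = qq k / 2"
  by (simp add: qq_def)

lemma surv_lower:
  "\<forall>h. h \<noteq> [] \<longrightarrow>
     (last h = 0 \<longrightarrow> ennreal (1 - 2 * qq (length h + j + 1)) \<le> surv M0 (sigj j) {1} n h) \<and>
     (last h = length h + j \<longrightarrow> 2 \<le> last h \<longrightarrow> ennreal (1 - 2 * qq (length h + j)) \<le> surv M0 (sigj j) {1} n h)"
proof (induction n)
  case 0
  then show ?case by (simp add: ennreal_le_1 qq_pos less_imp_le)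
next
  case (Suc n)
  show ?case
  proof (intro allI impI conjI)
    fix h :: "nat list" assume h: "h \<noteq> []" and l: "last h = 0"
    have "surv M0 (sigj j) {1} (Suc n) h = surv M0 (sigj j) {1} n (h @ [length h + j + 1])"
      using h l by (simp add: step0 sigj_eq)
    also have "ennreal (1 - 2 * qq (length h + j + 1)) \<le> \<dots>"
      using Suc.IH[rule_format, of "h @ [length h + j + 1]"] h by (cases h) auto
    finally show "ennreal (1 - 2 * qq (length h + j + 1)) \<le> surv M0 (sigj j) {1} (Suc n) h" .
  next
    fix h :: "nat list" assume h: "h \<noteq> []" and l: "last h = length h + j" and k2: "2 \<le> last h"
    define k where "k = last h"
    have k0: "k \<noteq> 0" using k2 k_def by simp
    have "surv M0 (sigj j) {1} (Suc n) h
       = surv M0 (sigj j) {1} n (h @ [0]) * ennreal (1 - qq k)"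
      using k2 k0 by (simp add: step0 int_k k_def)
    moreover have "ennreal (1 - qq (Suc k)) \<le> surv M0 (sigj j) {1} n (h @ [0])"
      using Suc.IH[rule_format, of "h @ [0]"] l by (simp add: k_def qq_Suc)
    ultimately have "ennreal (1 - qq (Suc k)) * ennreal (1 - qq k) \<le> surv M0 (sigj j) {1} (Suc n) h"
      by (simp add: mult_right_mono)
    moreover have "ennreal (1 - qq (Suc k)) * ennreal (1 - qq k) = ennreal ((1 - qq (Suc k)) * (1 - qq k))"
      using qq_le1[of k] qq_le1[of "Suc k"] by (simp add: ennreal_mult)
    moreover have "1 - 2 * qq k \<le> (1 - qq (Suc k)) * (1 - qq k)"
      using qq_pos[of k] qq_le1[of k] unfolding qq_Suc by (simp add: algebra_simps)
    ultimately show "ennreal (1 - 2 * qq (length h + j)) \<le> surv M0 (sigj j) {1} (Suc n) h"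
      using l k_def by (metis ennreal_leI order_trans)
  qed
qed

lemma HD_part:
  assumes "0 \<le> c" "c < 1"
  shows "\<exists>\<sigma>. HD_strategy M0 \<sigma> \<and> safety_prob M0 \<sigma> {1} 0 \<ge> ennreal c"
proof -
  obtain j where j: "(1/2::real)^j < (1 - c) / 2"
    using real_arch_pow_inv[of "(1 - c)/2" "1/2"] assms by auto
  have hd: "HD_strategy M0 (sigj j)"
    unfolding HD_strategy_def
    apply (rule exI[of _ UNIV], rule exI[of _ 0], rule exI[of _ pu0], rule exI[of _ "psj j"])
    by (auto simp: transducer_def deterministic_transducer_def implements_def sigj_def
        pu0_def psj_def M0_def succs_def)
  have "ennreal c \<le> ennreal (1 - 2 * qq (j + 2))"
  proof (rule ennreal_leI)
    have "qq (j + 2) \<le> qq j" unfolding qq_def by (simp add: power_decreasing)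
    moreover have "0 \<le> qq j" using qq_pos[of j] by simp
    moreover have "2 * qq j < 1 - c" using j unfolding qq_def[symmetric] by simp
    ultimately show "c \<le> 1 - 2 * qq (j + 2)" by linarith
  qed
  also have "\<dots> \<le> (INF n. surv M0 (sigj j) {1} n [0])"
  proof (rule INF_greatest)
    fix n
    show "ennreal (1 - 2 * qq (j + 2)) \<le> surv M0 (sigj j) {1} n [0]"
      using surv_lower[of j n, rule_format, of "[0]"] by simp
  qed
  finally show ?thesis using hd by (auto simp: safety_prob_def)
qed

definition gg :: "nat \<Rightarrow> ennreal" where "gg k = ennreal (1 - qq k)"

lemma gg_lt1:
  fixes D :: "nat pmf"
  shows "(\<integral>\<^sup>+ k. gg k \<partial>measure_pmf D) < 1"
proof -
  have "(\<integral>\<^sup>+ k. gg k + ennreal (qq k) \<partial>measure_pmf D) = (\<integral>\<^sup>+ k. 1 \<partial>measure_pmf D)"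
  proof (intro nn_integral_cong)
    fix k
    have "gg k + ennreal (qq k) = ennreal (1 - qq k + qq k)"
      using qq_le1[of k] qq_pos[of k] by (simp add: gg_def ennreal_plus[symmetric])
    then show "gg k + ennreal (qq k) = 1" by simp
  qed
  also have "\<dots> = 1" by simp
  finally have sum1: "(\<integral>\<^sup>+ k. gg k \<partial>measure_pmf D) + (\<integral>\<^sup>+ k. ennreal (qq k) \<partial>measure_pmf D) = 1"
    by (subst (asm) nn_integral_add) auto
  obtain k0 where k0: "k0 \<in> set_pmf D" using set_pmf_not_empty[of D] by blast
  have "0 < ennreal (pmf D k0) * ennreal (qq k0)"
    using k0 qq_pos[of k0] by (simp add: pmf_positive ennreal_zero_less_mult_iff)
  also have "\<dots> \<le> (\<integral>\<^sup>+ k. ennreal (pmf D k) * ennreal (qq k) \<partial>count_space UNIV)"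
    by (rule nn_integral_ge_point[where p = "\<lambda>k. ennreal (pmf D k) * ennreal (qq k)"]) simp
  also have "\<dots> = (\<integral>\<^sup>+ k. ennreal (qq k) \<partial>measure_pmf D)"
    by (simp add: nn_integral_measure_pmf)
  finally have pos: "0 < (\<integral>\<^sup>+ k. ennreal (qq k) \<partial>measure_pmf D)" .
  show ?thesis
  proof (rule ccontr)
    assume "\<not> ?thesis"
    then have "1 \<le> (\<integral>\<^sup>+ k. gg k \<partial>measure_pmf D)" by simp
    then have "1 + (\<integral>\<^sup>+ k. ennreal (qq k) \<partial>measure_pmf D) \<le> 1"
      using sum1 add_right_mono[of 1 "(\<integral>\<^sup>+ k. gg k \<partial>measure_pmf D)" "(\<integral>\<^sup>+ k. ennreal (qq k) \<partial>measure_pmf D)"] by simp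
    then show False using pos by simp
  qed
qed

lemma upd_supp:
  assumes "transducer M0 Mem m0 pu ps" "m \<in> Mem"
  shows "set_pmf (upd_ext pu m xs) \<subseteq> Mem"
  using assms(2)
proof (induction xs arbitrary: m)
  case Nil then show ?case by simp
next
  case (Cons x xs)
  have "set_pmf (pu m x) \<subseteq> Mem" using assms(1) Cons.prems by (auto simp: transducer_def M0_def)
  then show ?case using Cons by auto
qed

lemma FR_part:
  assumes "FR_strategy M0 \<sigma>"
  shows "safety_prob M0 \<sigma> {1} 0 = 0"
proof -
  obtain Mem m0 pu ps where fin: "finite Mem" and tr: "transducer M0 Mem m0 pu ps"
    and imp: "implements M0 \<sigma> m0 pu ps"
    using assms unfolding FR_strategy_def by blast
  have m0: "m0 \<in> Mem" using tr by (simp add: transducer_def)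
  define G where "G m = (\<integral>\<^sup>+ k. gg k \<partial>measure_pmf (ps m 0))" for m
  define \<gamma> where "\<gamma> = Max (G ` Mem)"
  have Gle: "G m \<le> \<gamma>" if "m \<in> Mem" for m
    using fin that by (simp add: \<gamma>_def)
  have glt: "\<gamma> < 1"
  proof -
    have "\<gamma> \<in> G ` Mem" unfolding \<gamma>_def using fin m0 by (intro Max_in) auto
    then show ?thesis using gg_lt1 by (auto simp: G_def)
  qed
  have sig: "\<sigma> h = bind_pmf (upd_ext pu m0 (butlast h)) (\<lambda>m. ps m 0)"
    if "h \<noteq> []" "last h = 0" for h
  proof -
    have "h \<in> histories M0" using that by (simp add: histories_def M0_def)
    then show ?thesis using imp that by (simp add: implements_def induced_strategy_def)
  qed
  have supp: "set_pmf (\<sigma> h) \<subseteq> {k. 2 \<le> k}" if hh: "h \<noteq> []" "last h = 0" for h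
  proof
    fix k assume "k \<in> set_pmf (\<sigma> h)"
    then obtain m where m: "m \<in> set_pmf (upd_ext pu m0 (butlast h))" "k \<in> set_pmf (ps m 0)"
      using sig[OF hh] by auto
    have "m \<in> Mem" using upd_supp[OF tr m0] m(1) by auto
    then have "set_pmf (ps m 0) \<subseteq> succs M0 0" using tr by (auto simp: transducer_def M0_def)
    then show "k \<in> {k. 2 \<le> k}" using m(2) succs0 by auto
  qed
  have intb: "(\<integral>\<^sup>+ k. gg k \<partial>measure_pmf (\<sigma> h)) \<le> \<gamma>" if "h \<noteq> []" "last h = 0" for h
  proof -
    have "(\<integral>\<^sup>+ k. gg k \<partial>measure_pmf (\<sigma> h)) = (\<integral>\<^sup>+ m. G m \<partial>measure_pmf (upd_ext pu m0 (butlast h)))"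
      using sig[OF that] by (simp add: G_def)
    also have "\<dots> \<le> (\<integral>\<^sup>+ m. \<gamma> \<partial>measure_pmf (upd_ext pu m0 (butlast h)))"
      using upd_supp[OF tr m0] Gle by (intro nn_integral_mono_AE) (auto simp: AE_measure_pmf_iff)
    also have "\<dots> = \<gamma>" by simp
    finally show ?thesis .
  qed
  have main: "\<forall>h. h \<noteq> [] \<longrightarrow> last h = 0 \<longrightarrow> surv M0 \<sigma> {1} (2 * n) h \<le> \<gamma> ^ n" for n
  proof (induction n)
    case 0 then show ?case by simp
  next
    case (Suc n)
    show ?case
    proof (intro allI impI)
      fix h :: "nat list" assume h: "h \<noteq> []" "last h = 0"
      have "surv M0 \<sigma> {1} (2 * Suc n) h = surv M0 \<sigma> {1} (Suc (Suc (2 * n))) h" by simp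
      also have "\<dots> = (\<integral>\<^sup>+ k. (if k \<in> {1} then 0 else surv M0 \<sigma> {1} (Suc (2 * n)) (h @ [k])) \<partial>measure_pmf (\<sigma> h))"
        by (subst surv.simps(2)) (simp only: step0 h(2) if_True simp_thms)
      also have "\<dots> \<le> (\<integral>\<^sup>+ k. \<gamma> ^ n * gg k \<partial>measure_pmf (\<sigma> h))"
      proof (intro nn_integral_mono_AE, unfold AE_measure_pmf_iff, intro ballI)
        fix k assume "k \<in> set_pmf (\<sigma> h)"
        then have k2: "2 \<le> k" using supp[OF h] by auto
        then have "(if k \<in> {1} then 0 else surv M0 \<sigma> {1} (Suc (2 * n)) (h @ [k]))
            = surv M0 \<sigma> {1} (2 * n) (h @ [k, 0]) * ennreal (1 - qq k)"
          by (simp add: step0 int_k)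
        also have "\<dots> \<le> \<gamma> ^ n * gg k"
          using Suc.IH[rule_format, of "h @ [k, 0]"] by (simp add: gg_def mult_right_mono)
        finally show "(if k \<in> {1} then 0 else surv M0 \<sigma> {1} (Suc (2 * n)) (h @ [k])) \<le> \<gamma> ^ n * gg k" .
      qed
      also have "\<dots> = \<gamma> ^ n * (\<integral>\<^sup>+ k. gg k \<partial>measure_pmf (\<sigma> h))"
        by (simp add: nn_integral_cmult)
      also have "\<dots> \<le> \<gamma> ^ n * \<gamma>"
        using intb[OF h] by (simp add: mult_left_mono)
      also have "\<dots> = \<gamma> ^ Suc n" by (simp add: mult.commute)
      finally show "surv M0 \<sigma> {1} (2 * Suc n) h \<le> \<gamma> ^ Suc n" .
    qed
  qed
  obtain r where r: "\<gamma> = ennreal r" "0 \<le> r" "r < 1"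
    using glt by (cases \<gamma> rule: ennreal_cases) auto
  have "(INF n. surv M0 \<sigma> {1} n [0]) \<le> 0"
  proof (rule ennreal_le_epsilon)
    fix e :: real assume e: "0 < e"
    obtain n where n: "r ^ n < e" using real_arch_pow_inv[OF e r(3)] by blast
    have "(INF n. surv M0 \<sigma> {1} n [0]) \<le> surv M0 \<sigma> {1} (2 * n) [0]" by (rule INF_lower) simp
    also have "\<dots> \<le> \<gamma> ^ n" using main[of n] by simp
    also have "\<dots> = ennreal (r ^ n)" using r by (simp add: ennreal_power)
    also have "\<dots> \<le> 0 + ennreal e" using n by (simp add: ennreal_leI)
    finally show "(INF n. surv M0 \<sigma> {1} n [0]) \<le> 0 + ennreal e" .
  qed
  then show ?thesis by (simp add: safety_prob_def)
qed

theorem theorem5: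
  shows "\<exists>M s T. valid_mdp M \<and> infinitely_branching M \<and> s \<in> mdp_states M \<and>
           T \<subseteq> mdp_states M \<and>
           (\<forall>\<sigma>. FR_strategy M \<sigma> \<longrightarrow> safety_prob M \<sigma> T s = 0) \<and>
           (\<forall>c::real. 0 \<le> c \<and> c < 1 \<longrightarrow>
              (\<exists>\<sigma>. HD_strategy M \<sigma> \<and> safety_prob M \<sigma> T s \<ge> ennreal c))"
  apply (rule exI[of _ M0], rule exI[of _ 0], rule exI[of _ "{1}"])
  using valid infb FR_part HD_part by (auto simp: M0_def)

end
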